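(* An optimal digraph has no stable set of size at least $3$.
   Context: Digraphs are finite, loopless, with at most one edge $uv$ per ordered pair. A set $X$ of vertices is stable if $uv\notin E(G)$ for all $u,v\in X$. A digraph is $2$-free if no distinct $u,v$ have both $uv,vu$ as edges. A circular interval digraph is a digraph together with a fixed arrangement of its vertices in a circle such that for all distinct $u,v,w$ in clockwise order with $uw\in E(G)$, also $uv,vw\in E(G)$. For distinct $u,v$, $d(u,v) = 1 + |\{w: u,w,v \text{ distinct, in clockwise order}\}|$; this is the length of the ordered pair $uv$. A non-edge is an ordered pair $(u,v)$ of distinct vertices with neither $uv$ nor $vu$ an edge; its length is $d(u,v)$. $\xi(G)$ is the number of pairs $(uv,(w,x))$ with $uv\in E(G)$, $(w,x)$ a non-edge, $d(u,v)>d(w,x)$. $\tilde P_3(G)$ is the number of triples $(a,b,c)$ of distinct vertices with $ab,bc\in E(G)$ and $ac,ca\notin E(G)$. For fixed $n\ge 4$, $G$ is optimal if it is a $2$-free circular interval digraph on $n$ vertices maximizing $\tilde P_3$ among all such digraphs and, subject to this, minimizing $\xi(G)$. *)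

theory Defs
  imports Main
begin

text \<open>Digraphs on the vertex set {0..<n}; the circular arrangement is the
 fixed clockwise order 0,1,...,n-1 (every arranged digraph is isomorphic to one
 of these, and all notions below are invariant under such relabelling).\<close>

definition digraph :: "nat \<Rightarrow> (nat \<times> nat) set \<Rightarrow> bool" where
  "digraph n E \<longleftrightarrow> E \<subseteq> {0..<n} \<times> {0..<n} \<and> (\<forall>u. (u, u) \<notin> E)"

definition two_free :: "(nat \<times> nat) set \<Rightarrow> bool" where
  "two_free E \<longleftrightarrow> (\<forall>u v. u \<noteq> v \<longrightarrow> \<not> ((u, v) \<in> E \<and> (v, u) \<in> E))"

definition cw :: "nat \<Rightarrow> nat \<Rightarrow> nat \<Rightarrow> nat \<Rightarrow> bool" where
  "cw n u v w \<longleftrightarrow> u < n \<and> v < n \<and> w < n \<and> u \<noteq> v \<and> v \<noteq> w \<and> u \<noteq> w \<and>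
     (int v - int u) mod int n < (int w - int u) mod int n"

definition circ_interval :: "nat \<Rightarrow> (nat \<times> nat) set \<Rightarrow> bool" where
  "circ_interval n E \<longleftrightarrow> digraph n E \<and>
     (\<forall>u v w. cw n u v w \<and> (u, w) \<in> E \<longrightarrow> (u, v) \<in> E \<and> (v, w) \<in> E)"

definition dist_cw :: "nat \<Rightarrow> nat \<Rightarrow> nat \<Rightarrow> nat" where
  "dist_cw n u v = 1 + card {w. cw n u w v}"

definition non_edge :: "nat \<Rightarrow> (nat \<times> nat) set \<Rightarrow> nat \<times> nat \<Rightarrow> bool" where
  "non_edge n E p \<longleftrightarrow> fst p < n \<and> snd p < n \<and> fst p \<noteq> snd p \<and>
     p \<notin> E \<and> (snd p, fst p) \<notin> E"

definition xi :: "nat \<Rightarrow> (nat \<times> nat) set \<Rightarrow> nat" where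
  "xi n E = card {(e, f). e \<in> E \<and> non_edge n E f \<and>
      dist_cw n (fst e) (snd e) > dist_cw n (fst f) (snd f)}"

definition P3t :: "nat \<Rightarrow> (nat \<times> nat) set \<Rightarrow> nat" where
  "P3t n E = card {(a, b, c). a < n \<and> b < n \<and> c < n \<and> a \<noteq> b \<and> b \<noteq> c \<and> a \<noteq> c \<and>
      (a, b) \<in> E \<and> (b, c) \<in> E \<and> (a, c) \<notin> E \<and> (c, a) \<notin> E}"

definition admissible :: "nat \<Rightarrow> (nat \<times> nat) set \<Rightarrow> bool" where
  "admissible n E \<longleftrightarrow> two_free E \<and> circ_interval n E"

definition optimal :: "nat \<Rightarrow> (nat \<times> nat) set \<Rightarrow> bool" where
  "optimal n E \<longleftrightarrow> admissible n E \<and>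
     (\<forall>E'. admissible n E' \<longrightarrow> P3t n E' \<le> P3t n E) \<and>
     (\<forall>E'. admissible n E' \<and> P3t n E' = P3t n E \<longrightarrow> xi n E \<le> xi n E')"

definition stable :: "(nat \<times> nat) set \<Rightarrow> nat set \<Rightarrow> bool" where
  "stable E X \<longleftrightarrow> (\<forall>u\<in>X. \<forall>v\<in>X. (u, v) \<notin> E)"

end

theory Submission
  imports Defs
begin

lemma intmod_diff:
  assumes "x < n" "y < n"
  shows "(int y - int x) mod int n = (if x \<le> y then int y - int x else int y - int x + int n)"
proof (cases "x \<le> y")
  case True thus ?thesis using assms by (simp add: mod_pos_pos_trivial)
next
  case False
  have "(int y - int x) mod int n = (int y - int x + int n) mod int n" by simp
  also have "\<dots> = int y - int x + int n" using assms False by (intro mod_pos_pos_trivial) auto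
  finally show ?thesis using False by simp
qed

lemma cw_lin: "cw n u v w \<longleftrightarrow> u<n \<and> v<n \<and> w<n \<and> ((u<v \<and> v<w) \<or> (v<w \<and> w<u) \<or> (w<u \<and> u<v))"
proof -
  { assume "u<n" "v<n" "w<n"
    then have "cw n u v w \<longleftrightarrow> u \<noteq> v \<and> v \<noteq> w \<and> u \<noteq> w \<and>
      (if u \<le> v then int v - int u else int v - int u + int n) < (if u \<le> w then int w - int u else int w - int u + int n)"
      unfolding cw_def using intmod_diff by simp
    also have "\<dots> \<longleftrightarrow> ((u<v \<and> v<w) \<or> (v<w \<and> w<u) \<or> (w<u \<and> u<v))"
      using \<open>u<n\<close> \<open>v<n\<close> \<open>w<n\<close> by auto
    finally have ?thesis using \<open>u<n\<close> \<open>v<n\<close> \<open>w<n\<close> by simp }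
  thus ?thesis unfolding cw_def by auto
qed

lemma arc: "circ_interval n E \<Longrightarrow> (a,c) \<in> E \<Longrightarrow> cw n a b c \<Longrightarrow> (a,b) \<in> E \<and> (b,c) \<in> E"
  unfolding circ_interval_def by blast

definition rot :: "nat \<Rightarrow> nat \<Rightarrow> nat \<Rightarrow> nat" where "rot n k x = (x + k) mod n"
definition rotE :: "nat \<Rightarrow> nat \<Rightarrow> (nat \<times> nat) set \<Rightarrow> (nat \<times> nat) set" where
  "rotE n k E = (\<lambda>(a,b). (rot n k a, rot n k b)) ` E"

lemma rot_lt: "0 < n \<Longrightarrow> rot n k x < n" by (simp add: rot_def)

lemma rot_inv: assumes "0<n" "x < n" shows "rot n (n - k mod n) (rot n k x) = x"
proof -
  have "rot n (n - k mod n) (rot n k x) = ((x + k) mod n + (n - k mod n)) mod n" by (simp add: rot_def)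
  also have "\<dots> = (x + k + (n - k mod n)) mod n" by (simp add: mod_add_left_eq)
  also have "x + k + (n - k mod n) = x + (k div n) * n + n"
    using assms by (metis add.assoc add.commute div_mult_mod_eq le_add_diff_inverse mod_le_divisor)
  also have "(x + (k div n) * n + n) mod n = x" using assms by simp
  finally show ?thesis .
qed

lemma rot_inv2: assumes "0<n" "x < n" shows "rot n k (rot n (n - k mod n) x) = x"
proof -
  have "rot n k (rot n (n - k mod n) x) = ((x + (n - k mod n)) mod n + k) mod n" by (simp add: rot_def)
  also have "\<dots> = (x + (n - k mod n) + k) mod n" by (simp add: mod_add_left_eq)
  also have "x + (n - k mod n) + k = x + (k div n) * n + n"
    using assms by (metis add.assoc add.commute div_mult_mod_eq le_add_diff_inverse mod_le_divisor)
  also have "(x + (k div n) * n + n) mod n = x" using assms by simp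
  finally show ?thesis .
qed

lemma rot_inj: "0<n \<Longrightarrow> x<n \<Longrightarrow> y<n \<Longrightarrow> rot n k x = rot n k y \<Longrightarrow> x = y"
  by (metis rot_inv)

lemma rot_surj: "0<n \<Longrightarrow> y<n \<Longrightarrow> \<exists>b<n. y = rot n k b"
  by (metis rot_inv2 rot_lt)

lemma cw_rot: assumes "0<n" "a<n" "b<n" "c<n"
  shows "cw n (rot n k a) (rot n k b) (rot n k c) \<longleftrightarrow> cw n a b c"
proof -
  have m: "\<And>x y. (int (rot n k y) - int (rot n k x)) mod int n = (int y - int x) mod int n"
  proof -
    fix x y
    have "(int (rot n k y) - int (rot n k x)) mod int n = ((int y + int k) mod int n - (int x + int k) mod int n) mod int n"
      by (simp add: rot_def of_nat_mod)
    also have "\<dots> = ((int y + int k) - (int x + int k)) mod int n" by (simp add: mod_diff_eq)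
    finally show "(int (rot n k y) - int (rot n k x)) mod int n = (int y - int x) mod int n" by simp
  qed
  have i: "\<And>x y. x<n \<Longrightarrow> y<n \<Longrightarrow> rot n k x = rot n k y \<longleftrightarrow> x = y" using rot_inj assms by blast
  show ?thesis unfolding cw_def using m i assms rot_lt by auto
qed

lemma mem_rotE: assumes "0<n" "E \<subseteq> {..<n}\<times>{..<n}" "a<n" "b<n"
  shows "(rot n k a, rot n k b) \<in> rotE n k E \<longleftrightarrow> (a,b) \<in> E"
proof
  assume "(rot n k a, rot n k b) \<in> rotE n k E"
  then obtain c d where cd: "(c,d) \<in> E" "rot n k a = rot n k c" "rot n k b = rot n k d"
    unfolding rotE_def by auto
  then have "c<n" "d<n" using assms by auto
  then show "(a,b) \<in> E" using cd rot_inj assms by metis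
qed (auto simp: rotE_def)

lemma rotE_elem: assumes "(x,y) \<in> rotE n k E"
  obtains a b where "(a,b) \<in> E" "x = rot n k a" "y = rot n k b"
  using assms unfolding rotE_def by auto

lemma rotE_sub: "0<n \<Longrightarrow> rotE n k E \<subseteq> {..<n}\<times>{..<n}"
  unfolding rotE_def using rot_lt by auto

lemma rotE_inv: assumes "0<n" "E \<subseteq> {..<n}\<times>{..<n}"
  shows "rotE n (n - k mod n) (rotE n k E) = E"
proof -
  have "rotE n (n - k mod n) (rotE n k E) = (\<lambda>(a,b). (rot n (n - k mod n) (rot n k a), rot n (n - k mod n) (rot n k b))) ` E"
    unfolding rotE_def image_image by (simp add: case_prod_beta)
  also have "\<dots> = (\<lambda>p. p) ` E"
    using assms rot_inv by (intro image_cong) auto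
  finally show ?thesis by simp
qed

lemma digraph_sub: "digraph n E \<Longrightarrow> E \<subseteq> {..<n}\<times>{..<n}"
  unfolding digraph_def by auto

lemma admissible_rot: assumes "0<n" "admissible n E"
  shows "admissible n (rotE n k E)"
proof -
  have sub: "E \<subseteq> {..<n}\<times>{..<n}" using assms digraph_sub unfolding admissible_def circ_interval_def by blast
  have loop: "\<And>u. (u,u) \<notin> E" using assms unfolding admissible_def circ_interval_def digraph_def by blast
  have tf: "two_free E" using assms unfolding admissible_def by blast
  have ci: "circ_interval n E" using assms unfolding admissible_def by blast
  have dg: "digraph n (rotE n k E)"
    unfolding digraph_def
  proof
    show "rotE n k E \<subseteq> {0..<n} \<times> {0..<n}" using rotE_sub[OF assms(1), of k E] by auto
    show "\<forall>u. (u, u) \<notin> rotE n k E"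
    proof (intro allI notI)
      fix u assume "(u,u) \<in> rotE n k E"
      then obtain a b where "(a,b) \<in> E" "u = rot n k a" "u = rot n k b" by (rule rotE_elem)
      then show False using sub rot_inj[OF assms(1)] loop by (metis mem_Sigma_iff lessThan_iff subsetD)
    qed
  qed
  have tf2: "two_free (rotE n k E)"
    unfolding two_free_def
  proof (intro allI impI notI)
    fix u v assume "u \<noteq> v" "(u, v) \<in> rotE n k E \<and> (v, u) \<in> rotE n k E"
    then obtain a b where ab: "(a,b) \<in> E" "u = rot n k a" "v = rot n k b" by (meson rotE_elem)
    have "a<n" "b<n" using ab sub by auto
    have "(rot n k b, rot n k a) \<in> rotE n k E" using \<open>(u, v) \<in> rotE n k E \<and> (v, u) \<in> rotE n k E\<close> ab by simp
    then have "(b,a) \<in> E" using mem_rotE[OF assms(1) sub \<open>b<n\<close> \<open>a<n\<close>] by simp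
    moreover have "a \<noteq> b" using ab \<open>u\<noteq>v\<close> by auto
    ultimately show False using tf ab unfolding two_free_def by auto
  qed
  have ci2: "\<forall>u v w. cw n u v w \<and> (u, w) \<in> rotE n k E \<longrightarrow> (u, v) \<in> rotE n k E \<and> (v, w) \<in> rotE n k E"
  proof (intro allI impI)
    fix u v w assume h: "cw n u v w \<and> (u, w) \<in> rotE n k E"
    then obtain a c where ac: "(a,c) \<in> E" "u = rot n k a" "w = rot n k c" by (meson rotE_elem)
    have "a<n" "c<n" using ac sub by auto
    have "v<n" using h unfolding cw_def by auto
    then obtain b where b: "b<n" "v = rot n k b" using rot_surj assms(1) by blast
    have "cw n a b c" using cw_rot[OF assms(1) \<open>a<n\<close> b(1) \<open>c<n\<close>] h ac b by simp
    then have "(a,b) \<in> E" "(b,c) \<in> E" using arc[OF ci ac(1)] by auto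
    then show "(u, v) \<in> rotE n k E \<and> (v, w) \<in> rotE n k E" using ac b unfolding rotE_def by force
  qed
  show ?thesis unfolding admissible_def circ_interval_def using dg tf2 ci2 by blast
qed

definition T3 :: "nat \<Rightarrow> (nat \<times> nat) set \<Rightarrow> (nat \<times> nat \<times> nat) set" where
  "T3 n E = {(a, b, c). a < n \<and> b < n \<and> c < n \<and> a \<noteq> b \<and> b \<noteq> c \<and> a \<noteq> c \<and>
      (a, b) \<in> E \<and> (b, c) \<in> E \<and> (a, c) \<notin> E \<and> (c, a) \<notin> E}"

lemma P3t_T3: "P3t n E = card (T3 n E)" unfolding P3t_def T3_def by simp

lemma T3_finite: "finite (T3 n E)"
proof -
  have "T3 n E \<subseteq> {..<n} \<times> {..<n} \<times> {..<n}" unfolding T3_def by auto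
  thus ?thesis by (rule finite_subset) auto
qed

definition XS :: "nat \<Rightarrow> (nat \<times> nat) set \<Rightarrow> ((nat \<times> nat) \<times> (nat \<times> nat)) set" where
  "XS n E = {(e, f). e \<in> E \<and> non_edge n E f \<and>
      dist_cw n (fst e) (snd e) > dist_cw n (fst f) (snd f)}"

lemma xi_XS: "xi n E = card (XS n E)" unfolding xi_def XS_def by simp

lemma XS_finite: "E \<subseteq> {..<n}\<times>{..<n} \<Longrightarrow> finite (XS n E)"
proof -
  assume "E \<subseteq> {..<n}\<times>{..<n}"
  then have "XS n E \<subseteq> ({..<n} \<times> {..<n}) \<times> ({..<n} \<times> {..<n})" unfolding XS_def non_edge_def by auto
  thus ?thesis by (rule finite_subset) auto
qed

lemma rot_eq_iff: "0<n \<Longrightarrow> x<n \<Longrightarrow> y<n \<Longrightarrow> rot n k x = rot n k y \<longleftrightarrow> x = y"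
  using rot_inj by blast

lemma T3_rot: assumes "0<n" "E \<subseteq> {..<n}\<times>{..<n}"
  shows "T3 n (rotE n k E) = (\<lambda>(a,b,c). (rot n k a, rot n k b, rot n k c)) ` T3 n E"
proof
  show "(\<lambda>(a,b,c). (rot n k a, rot n k b, rot n k c)) ` T3 n E \<subseteq> T3 n (rotE n k E)"
    unfolding T3_def using assms mem_rotE rot_lt rot_eq_iff by auto
next
  show "T3 n (rotE n k E) \<subseteq> (\<lambda>(a,b,c). (rot n k a, rot n k b, rot n k c)) ` T3 n E"
  proof
    fix p assume p: "p \<in> T3 n (rotE n k E)"
    then obtain x y z where xyz: "p = (x,y,z)" "x<n" "y<n" "z<n" unfolding T3_def by auto
    obtain a where a: "a<n" "x = rot n k a" using rot_surj assms(1) xyz by blast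
    obtain b where b: "b<n" "y = rot n k b" using rot_surj assms(1) xyz by blast
    obtain c where c: "c<n" "z = rot n k c" using rot_surj assms(1) xyz by blast
    have "(a,b,c) \<in> T3 n E" using p xyz a b c unfolding T3_def
      using mem_rotE[OF assms] rot_eq_iff[OF assms(1)] by auto
    then show "p \<in> (\<lambda>(a,b,c). (rot n k a, rot n k b, rot n k c)) ` T3 n E"
      using xyz a b c by force
  qed
qed

lemma P3t_rot: assumes "0<n" "E \<subseteq> {..<n}\<times>{..<n}"
  shows "P3t n (rotE n k E) = P3t n E"
proof -
  have "inj_on (\<lambda>(a,b,c). (rot n k a, rot n k b, rot n k c)) (T3 n E)"
    unfolding inj_on_def T3_def using rot_eq_iff[OF assms(1)] by auto
  then show ?thesis unfolding P3t_T3 T3_rot[OF assms] by (simp add: card_image)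
qed

lemma cwset_rot: assumes "0<n" "a<n" "b<n"
  shows "{w. cw n (rot n k a) w (rot n k b)} = rot n k ` {w. cw n a w b}"
proof
  show "rot n k ` {w. cw n a w b} \<subseteq> {w. cw n (rot n k a) w (rot n k b)}"
  proof
    fix x assume "x \<in> rot n k ` {w. cw n a w b}"
    then obtain w where w: "cw n a w b" "x = rot n k w" by auto
    then have "w<n" unfolding cw_def by auto
    then show "x \<in> {w. cw n (rot n k a) w (rot n k b)}" using cw_rot[OF assms(1,2) \<open>w<n\<close> assms(3)] w by auto
  qed
next
  show "{w. cw n (rot n k a) w (rot n k b)} \<subseteq> rot n k ` {w. cw n a w b}"
  proof
    fix w assume w: "w \<in> {w. cw n (rot n k a) w (rot n k b)}"
    then have "w<n" unfolding cw_def by auto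
    then obtain c where c: "c<n" "w = rot n k c" using rot_surj assms by blast
    then have "cw n a c b" using w cw_rot assms by auto
    then show "w \<in> rot n k ` {w. cw n a w b}" using c by auto
  qed
qed

lemma dist_rot: assumes "0<n" "a<n" "b<n"
  shows "dist_cw n (rot n k a) (rot n k b) = dist_cw n a b"
proof -
  have "inj_on (rot n k) {w. cw n a w b}" unfolding inj_on_def cw_def using rot_eq_iff[OF assms(1)] by auto
  then show ?thesis unfolding dist_cw_def cwset_rot[OF assms] by (simp add: card_image)
qed

lemma non_edge_rot: assumes "0<n" "E \<subseteq> {..<n}\<times>{..<n}" "a<n" "b<n"
  shows "non_edge n (rotE n k E) (rot n k a, rot n k b) \<longleftrightarrow> non_edge n E (a,b)"
  unfolding non_edge_def using assms mem_rotE[OF assms(1,2)] rot_eq_iff[OF assms(1)] rot_lt[OF assms(1)] by auto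

lemma XS_rot: assumes "0<n" "E \<subseteq> {..<n}\<times>{..<n}"
  shows "XS n (rotE n k E) = (\<lambda>((a,b),(c,d)). ((rot n k a, rot n k b),(rot n k c, rot n k d))) ` XS n E"
proof
  show "(\<lambda>((a,b),(c,d)). ((rot n k a, rot n k b),(rot n k c, rot n k d))) ` XS n E \<subseteq> XS n (rotE n k E)"
  proof
    fix p assume "p \<in> (\<lambda>((a,b),(c,d)). ((rot n k a, rot n k b),(rot n k c, rot n k d))) ` XS n E"
    then obtain a b c d where q: "((a,b),(c,d)) \<in> XS n E" "p = ((rot n k a, rot n k b),(rot n k c, rot n k d))"
      by auto
    then have "(a,b) \<in> E" "non_edge n E (c,d)" "dist_cw n a b > dist_cw n c d" unfolding XS_def by auto
    moreover have "a<n" "b<n" using assms \<open>(a,b) \<in> E\<close> by auto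
    moreover have "c<n" "d<n" using \<open>non_edge n E (c,d)\<close> unfolding non_edge_def by auto
    ultimately show "p \<in> XS n (rotE n k E)" unfolding XS_def using q(2)
      using mem_rotE[OF assms] non_edge_rot[OF assms] dist_rot[OF assms(1)] by auto
  qed
next
  show "XS n (rotE n k E) \<subseteq> (\<lambda>((a,b),(c,d)). ((rot n k a, rot n k b),(rot n k c, rot n k d))) ` XS n E"
  proof
    fix p assume p: "p \<in> XS n (rotE n k E)"
    then obtain x y z w where xyzw: "p = ((x,y),(z,w))" "(x,y) \<in> rotE n k E" "non_edge n (rotE n k E) (z,w)"
      "dist_cw n x y > dist_cw n z w" unfolding XS_def by auto
    have "x<n" "y<n" using xyzw(2) rotE_sub[OF assms(1)] by auto
    have "z<n" "w<n" using xyzw(3) unfolding non_edge_def by auto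
    obtain a where a: "a<n" "x = rot n k a" using rot_surj assms(1) \<open>x<n\<close> by blast
    obtain b where b: "b<n" "y = rot n k b" using rot_surj assms(1) \<open>y<n\<close> by blast
    obtain c where c: "c<n" "z = rot n k c" using rot_surj assms(1) \<open>z<n\<close> by blast
    obtain d where d: "d<n" "w = rot n k d" using rot_surj assms(1) \<open>w<n\<close> by blast
    have "((a,b),(c,d)) \<in> XS n E" unfolding XS_def
      using xyzw a b c d mem_rotE[OF assms] non_edge_rot[OF assms] dist_rot[OF assms(1)] by auto
    then show "p \<in> (\<lambda>((a,b),(c,d)). ((rot n k a, rot n k b),(rot n k c, rot n k d))) ` XS n E"
      using xyzw a b c d by force
  qed
qed

lemma xi_rot: assumes "0<n" "E \<subseteq> {..<n}\<times>{..<n}"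
  shows "xi n (rotE n k E) = xi n E"
proof -
  have "inj_on (\<lambda>((a,b),(c,d)). ((rot n k a, rot n k b),(rot n k c, rot n k d))) (XS n E)"
  proof (rule inj_onI)
    fix p q assume "p \<in> XS n E" "q \<in> XS n E"
      "(\<lambda>((a,b),(c,d)). ((rot n k a, rot n k b),(rot n k c, rot n k d))) p = (\<lambda>((a,b),(c,d)). ((rot n k a, rot n k b),(rot n k c, rot n k d))) q"
    moreover have "\<And>a b c d. ((a,b),(c,d)) \<in> XS n E \<Longrightarrow> a<n \<and> b<n \<and> c<n \<and> d<n"
      unfolding XS_def non_edge_def using assms(2) by auto
    ultimately show "p = q" using rot_eq_iff[OF assms(1)]
      by (cases p, cases q) (auto split: prod.splits)
  qed
  then show ?thesis unfolding xi_XS XS_rot[OF assms] by (simp add: card_image)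
qed

definition improvable :: "nat \<Rightarrow> (nat \<times> nat) set \<Rightarrow> bool" where
  "improvable n E \<longleftrightarrow> (\<exists>E'. admissible n E' \<and> (P3t n E' > P3t n E \<or> (P3t n E' = P3t n E \<and> xi n E' < xi n E)))"

lemma adm_sub: "admissible n E \<Longrightarrow> E \<subseteq> {..<n}\<times>{..<n}"
  unfolding admissible_def circ_interval_def using digraph_sub by blast

lemma improvable_rot: assumes "0<n" "admissible n E" "improvable n (rotE n k E)"
  shows "improvable n E"
proof -
  obtain E' where E': "admissible n E'" "P3t n E' > P3t n (rotE n k E) \<or> (P3t n E' = P3t n (rotE n k E) \<and> xi n E' < xi n (rotE n k E))"
    using assms(3) unfolding improvable_def by blast
  have s: "E \<subseteq> {..<n}\<times>{..<n}" "E' \<subseteq> {..<n}\<times>{..<n}" using assms(2) E'(1) adm_sub by auto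
  let ?F = "rotE n (n - k mod n) E'"
  have "admissible n ?F" using admissible_rot[OF assms(1) E'(1)] .
  moreover have "P3t n ?F = P3t n E'" "xi n ?F = xi n E'" using P3t_rot xi_rot assms(1) s by auto
  moreover have "P3t n (rotE n k E) = P3t n E" "xi n (rotE n k E) = xi n E" using P3t_rot xi_rot assms(1) s by auto
  ultimately show ?thesis unfolding improvable_def using E'(2) by metis
qed

lemma optimal_not_improvable: "optimal n E \<Longrightarrow> \<not> improvable n E"
  unfolding optimal_def improvable_def by (meson leD)

locale norm =
  fixes n :: nat and E :: "(nat \<times> nat) set" and Y :: nat
  assumes adm: "admissible n E" and Ypos: "0 < Y" and Yn: "Y < n"
    and nY1: "(0,Y) \<notin> E" and nY2: "(Y,0) \<notin> E"
begin

lemma sub: "E \<subseteq> {..<n}\<times>{..<n}" using adm adm_sub by blast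
lemma ci: "circ_interval n E" using adm unfolding admissible_def by blast
lemma tf: "two_free E" using adm unfolding admissible_def by blast
lemma noloop: "(u,u) \<notin> E" using adm unfolding admissible_def circ_interval_def digraph_def by blast
lemma inE: "(a,b) \<in> E \<Longrightarrow> a < n \<and> b < n" using sub by auto

lemma arcl: "(a,c) \<in> E \<Longrightarrow> cw n a b c \<Longrightarrow> (a,b) \<in> E \<and> (b,c) \<in> E" using arc[OF ci] by blast

definition part :: "nat \<Rightarrow> bool" where
  "part s \<longleftrightarrow> 0<s \<and> s<Y \<and> (0,s)\<notin>E \<and> (s,0)\<notin>E \<and> (s,Y)\<notin>E \<and> (Y,s)\<notin>E"

lemma P1: assumes "part s" "(s,c) \<in> E" shows "s<c \<and> c<Y"
proof -
  have "c<n" "s<n" using inE assms(2) by auto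
  have "c \<noteq> s" using noloop assms(2) by auto
  moreover have "\<not> c < s"
  proof
    assume "c<s"
    show False
    proof (cases "c = 0")
      case True thus False using assms unfolding part_def by auto
    next
      case False
      then have "cw n s 0 c" using \<open>c<s\<close> \<open>s<n\<close> unfolding cw_lin by auto
      then show False using arcl[OF assms(2)] assms(1) unfolding part_def by auto
    qed
  qed
  moreover have "c \<noteq> Y" using assms unfolding part_def by auto
  moreover have "\<not> Y < c"
  proof
    assume "Y<c"
    then have "cw n s Y c" using assms(1) \<open>c<n\<close> unfolding cw_lin part_def by auto
    then show False using arcl[OF assms(2)] assms(1) unfolding part_def by auto
  qed
  ultimately show ?thesis by auto
qed

lemma P2: assumes "part s" "(a,s) \<in> E" shows "0<a \<and> a<s"
proof -
  have "a<n" "s<n" using inE assms(2) by auto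
  have "a \<noteq> s" using noloop assms(2) by auto
  moreover have "a \<noteq> 0" using assms unfolding part_def by (metis)
  moreover have "\<not> s < a"
  proof
    assume "s<a"
    then have "cw n a 0 s" using assms(1) \<open>a<n\<close> unfolding cw_lin part_def by auto
    then show False using arcl[OF assms(2)] assms(1) unfolding part_def by auto
  qed
  ultimately show ?thesis by auto
qed

lemma v0: assumes "0<v" "v\<le>Y" shows "(v,0) \<notin> E"
proof
  assume h: "(v,0) \<in> E"
  show False
  proof (cases "v = Y")
    case True thus False using h nY2 by simp
  next
    case False
    then have "cw n v Y 0" using assms Yn unfolding cw_lin by auto
    then show False using arcl[OF h] nY2 by auto
  qed
qed

lemma outR: assumes "0<v" "v\<le>Y" "(v,c) \<in> E" shows "v<c"
proof -
  have "c<n" "v<n" using inE assms(3) by auto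
  have "c \<noteq> v" using noloop assms(3) by auto
  moreover have "\<not> c < v"
  proof
    assume "c<v"
    show False
    proof (cases "c = 0")
      case True thus False using assms v0 by auto
    next
      case False
      then have "cw n v 0 c" using \<open>c<v\<close> \<open>v<n\<close> unfolding cw_lin by auto
      then show False using arcl[OF assms(3)] v0 assms by auto
    qed
  qed
  ultimately show ?thesis by auto
qed

lemma Yu: assumes "u<Y" shows "(Y,u) \<notin> E"
proof
  assume h: "(Y,u) \<in> E"
  show False
  proof (cases "u = 0")
    case True thus False using h nY2 by simp
  next
    case False
    then have "cw n Y 0 u" using assms Yn unfolding cw_lin by auto
    then show False using arcl[OF h] nY2 by auto
  qed
qed

lemma inL: assumes "u<Y" "(a,u) \<in> E" shows "a<u \<or> Y<a"
proof -
  have "a<n" "u<n" using inE assms(2) by auto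
  have "a \<noteq> u" using noloop assms(2) by auto
  moreover have "a \<noteq> Y" using Yu assms by auto
  moreover have "\<not> (u < a \<and> a < Y)"
  proof
    assume "u < a \<and> a < Y"
    then have "cw n a Y u" using Yn unfolding cw_lin by auto
    then show False using arcl[OF assms(2)] Yu assms(1) by auto
  qed
  ultimately show ?thesis by auto
qed

lemma fin_out: "finite {c. (v,c) \<in> E}"
proof (rule finite_subset[of _ "{..<n}"])
  show "{c. (v,c) \<in> E} \<subseteq> {..<n}" using inE by blast
qed simp
lemma fin_in: "finite {a. (a,v) \<in> E}"
proof (rule finite_subset[of _ "{..<n}"])
  show "{a. (a,v) \<in> E} \<subseteq> {..<n}" using inE by blast
qed simp

lemma card_bound:
  fixes L G1 G2 T T1 :: "(nat\<times>nat\<times>nat) set"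
  assumes "finite T" "finite T1" "T - L \<subseteq> T1" "G1 \<subseteq> T1" "G2 \<subseteq> T1" "G1 \<inter> T = {}" "G2 \<inter> T = {}" "G1 \<inter> G2 = {}"
    "finite L"
  shows "card T + card G1 + card G2 \<le> card T1 + card L"
proof -
  have f: "finite G1" "finite G2" using assms finite_subset by blast+
  have "(T - L) \<union> G1 \<union> G2 \<subseteq> T1" using assms by blast
  then have "card ((T - L) \<union> G1 \<union> G2) \<le> card T1" using assms(2) card_mono by blast
  moreover have "card ((T - L) \<union> G1 \<union> G2) = card (T - L) + card G1 + card G2"
  proof -
    have a1: "(T - L) \<inter> G1 = {}" using assms(6) by blast
    have a2: "((T - L) \<union> G1) \<inter> G2 = {}" using assms(7,8) by blast
    have "card ((T - L) \<union> G1 \<union> G2) = card ((T - L) \<union> G1) + card G2"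
      using a2 f assms(1) by (intro card_Un_disjoint) auto
    also have "card ((T - L) \<union> G1) = card (T - L) + card G1"
      using a1 f assms(1) by (intro card_Un_disjoint) auto
    finally show ?thesis .
  qed
  moreover have "card T \<le> card (T - L) + card L"
  proof -
    have "T \<subseteq> (T - L) \<union> L" by blast
    then have "card T \<le> card ((T - L) \<union> L)" using assms by (intro card_mono) auto
    also have "\<dots> \<le> card (T - L) + card L" by (rule card_Un_le)
    finally show ?thesis .
  qed
  ultimately show ?thesis by linarith
qed

lemma out_move:
  assumes pt: "part t" and tv: "t<v" and vY: "v\<le>Y" and ntv: "(t,v)\<notin>E"
    and btw: "\<forall>w. t<w \<and> w<v \<longrightarrow> (t,w)\<in>E \<and> (w,v)\<in>E"
  shows "admissible n (insert (t,v) E)"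
    "P3t n E + card {c. (v,c)\<in>E} + card {a. (a,t)\<in>E} \<le> P3t n (insert (t,v) E) + card {c. (t,c)\<in>E}"
proof -
  let ?E1 = "insert (t,v) E"
  have t0: "0<t" using pt unfolding part_def by auto
  have vn: "v<n" using vY Yn by auto
  have tn: "t<n" using tv vn by auto
  have vt: "(v,t) \<notin> E" using outR[of v t] t0 tv vY by auto
  show "admissible n ?E1"
  proof -
    have "digraph n ?E1" using sub noloop tv vn tn unfolding digraph_def by auto
    moreover have "two_free ?E1" using tf vt tv unfolding two_free_def by auto
    moreover have "\<forall>a b c. cw n a b c \<and> (a,c) \<in> ?E1 \<longrightarrow> (a,b) \<in> ?E1 \<and> (b,c) \<in> ?E1"
    proof (intro allI impI)
      fix a b c assume h: "cw n a b c \<and> (a,c) \<in> ?E1"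
      show "(a,b) \<in> ?E1 \<and> (b,c) \<in> ?E1"
      proof (cases "(a,c) = (t,v)")
        case True
        then have "t<b \<and> b<v" using h tv unfolding cw_lin by auto
        then show ?thesis using btw True by auto
      next
        case False
        then have ac: "(a,c) \<in> E" using h by auto
        have "cw n a b c" using h by blast
        then show ?thesis using arcl[OF ac] by blast
      qed
    qed
    ultimately show ?thesis unfolding admissible_def circ_interval_def by blast
  qed
  let ?L = "(\<lambda>b. (t,b,v)) ` {c. (t,c)\<in>E}"
  let ?G1 = "(\<lambda>c. (t,v,c)) ` {c. (v,c)\<in>E}"
  let ?G2 = "(\<lambda>a. (a,t,v)) ` {a. (a,t)\<in>E}"
  have i: "T3 n E - ?L \<subseteq> T3 n ?E1"
  proof
    fix x assume x: "x \<in> T3 n E - ?L"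
    then obtain a b c where abc: "x = (a,b,c)" "a<n" "b<n" "c<n" "a\<noteq>b" "b\<noteq>c" "a\<noteq>c"
      "(a,b)\<in>E" "(b,c)\<in>E" "(a,c)\<notin>E" "(c,a)\<notin>E" unfolding T3_def by auto
    have "(a,c) \<noteq> (t,v)" using x abc by auto
    moreover have "(c,a) \<noteq> (t,v)"
    proof
      assume "(c,a) = (t,v)"
      then have "(v,b) \<in> E" "(b,t) \<in> E" using abc by auto
      then show False using P2[OF pt] outR[of v b] t0 tv vY by fastforce
    qed
    ultimately show "x \<in> T3 n ?E1" using abc unfolding T3_def by auto
  qed
  have g1: "?G1 \<subseteq> T3 n ?E1"
  proof
    fix x assume "x \<in> ?G1"
    then obtain c where c: "x = (t,v,c)" "(v,c) \<in> E" by auto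
    have vc: "v<c" using outR[OF _ vY c(2)] t0 tv by auto
    have cn: "c<n" using inE c(2) by auto
    have "(t,c) \<notin> E"
    proof
      assume "(t,c) \<in> E"
      moreover have "cw n t v c" using tv vc cn unfolding cw_lin by auto
      ultimately show False using arcl ntv by blast
    qed
    moreover have "(c,t) \<notin> E" using P2[OF pt] vc tv by fastforce
    ultimately show "x \<in> T3 n ?E1" using c vc tv tn vn cn unfolding T3_def by auto
  qed
  have g2: "?G2 \<subseteq> T3 n ?E1"
  proof
    fix x assume "x \<in> ?G2"
    then obtain a where a: "x = (a,t,v)" "(a,t) \<in> E" by auto
    have at: "0<a \<and> a<t" using P2[OF pt a(2)] .
    have "(a,v) \<notin> E"
    proof
      assume "(a,v) \<in> E"
      moreover have "cw n a t v" using at tv vn unfolding cw_lin by auto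
      ultimately show False using arcl ntv by blast
    qed
    moreover have "(v,a) \<notin> E" using outR[of v a] t0 tv vY at by fastforce
    ultimately show "x \<in> T3 n ?E1" using a at tv tn vn unfolding T3_def by auto
  qed
  have d1: "?G1 \<inter> T3 n E = {}" using ntv unfolding T3_def by auto
  have d2: "?G2 \<inter> T3 n E = {}" using ntv unfolding T3_def by auto
  have d3: "?G1 \<inter> ?G2 = {}" using noloop by auto
  have "card (T3 n E) + card ?G1 + card ?G2 \<le> card (T3 n ?E1) + card ?L"
    using card_bound[OF T3_finite T3_finite i g1 g2 d1 d2 d3] fin_out by blast
  moreover have "card ?G1 = card {c. (v,c)\<in>E}" by (rule card_image) (auto simp: inj_on_def)
  moreover have "card ?G2 = card {a. (a,t)\<in>E}" by (rule card_image) (auto simp: inj_on_def)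
  moreover have "card ?L \<le> card {c. (t,c)\<in>E}" by (rule card_image_le[OF fin_out])
  ultimately show "P3t n E + card {c. (v,c)\<in>E} + card {a. (a,t)\<in>E} \<le> P3t n ?E1 + card {c. (t,c)\<in>E}"
    unfolding P3t_T3 by linarith
qed

lemma in_move:
  assumes ps: "part s" and us: "u<s" and nus: "(u,s)\<notin>E"
    and btw: "\<forall>w. u<w \<and> w<s \<longrightarrow> (u,w)\<in>E \<and> (w,s)\<in>E"
  shows "admissible n (insert (u,s) E)"
    "P3t n E + card {a. (a,u)\<in>E} + card {c. (s,c)\<in>E} \<le> P3t n (insert (u,s) E) + card {a. (a,s)\<in>E}"
proof -
  let ?E1 = "insert (u,s) E"
  have sY: "s<Y" using ps unfolding part_def by auto
  have sn: "s<n" using sY Yn by auto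
  have un: "u<n" using us sn by auto
  have uY: "u<Y" using us sY by auto
  have su: "(s,u) \<notin> E" using P1[OF ps, of u] us by auto
  show "admissible n ?E1"
  proof -
    have "digraph n ?E1" using sub noloop us un sn unfolding digraph_def by auto
    moreover have "two_free ?E1" using tf su us unfolding two_free_def by auto
    moreover have "\<forall>a b c. cw n a b c \<and> (a,c) \<in> ?E1 \<longrightarrow> (a,b) \<in> ?E1 \<and> (b,c) \<in> ?E1"
    proof (intro allI impI)
      fix a b c assume h: "cw n a b c \<and> (a,c) \<in> ?E1"
      show "(a,b) \<in> ?E1 \<and> (b,c) \<in> ?E1"
      proof (cases "(a,c) = (u,s)")
        case True
        then have "u<b \<and> b<s" using h us unfolding cw_lin by auto
        then show ?thesis using btw True by auto
      next
        case False
        then have ac: "(a,c) \<in> E" using h by auto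
        have "cw n a b c" using h by blast
        then show ?thesis using arcl[OF ac] by blast
      qed
    qed
    ultimately show ?thesis unfolding admissible_def circ_interval_def by blast
  qed
  let ?L = "(\<lambda>b. (u,b,s)) ` {a. (a,s)\<in>E}"
  let ?G1 = "(\<lambda>a. (a,u,s)) ` {a. (a,u)\<in>E}"
  let ?G2 = "(\<lambda>c. (u,s,c)) ` {c. (s,c)\<in>E}"
  have i: "T3 n E - ?L \<subseteq> T3 n ?E1"
  proof
    fix x assume x: "x \<in> T3 n E - ?L"
    then obtain a b c where abc: "x = (a,b,c)" "a<n" "b<n" "c<n" "a\<noteq>b" "b\<noteq>c" "a\<noteq>c"
      "(a,b)\<in>E" "(b,c)\<in>E" "(a,c)\<notin>E" "(c,a)\<notin>E" unfolding T3_def by auto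
    have "(a,c) \<noteq> (u,s)" using x abc by auto
    moreover have "(c,a) \<noteq> (u,s)"
    proof
      assume "(c,a) = (u,s)"
      then have "(s,b) \<in> E" "(b,u) \<in> E" using abc by auto
      then show False using P1[OF ps] inL[OF uY] us by fastforce
    qed
    ultimately show "x \<in> T3 n ?E1" using abc unfolding T3_def by auto
  qed
  have g1: "?G1 \<subseteq> T3 n ?E1"
  proof
    fix x assume "x \<in> ?G1"
    then obtain a where a: "x = (a,u,s)" "(a,u) \<in> E" by auto
    have au: "a<u \<or> Y<a" using inL[OF uY a(2)] .
    have an: "a<n" using inE a(2) by auto
    have "(a,s) \<notin> E"
    proof
      assume h: "(a,s) \<in> E"
      then have "0<a \<and> a<s" using P2[OF ps] by auto
      then have "a<u" using au sY by auto
      then have "cw n a u s" using us sn unfolding cw_lin by auto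
      then show False using arcl[OF h] nus by blast
    qed
    moreover have "(s,a) \<notin> E" using P1[OF ps, of a] au us by auto
    moreover have "a \<noteq> u" using noloop a by auto
    moreover have "a \<noteq> s" using au us sY by auto
    ultimately show "x \<in> T3 n ?E1" using a us un sn an unfolding T3_def by auto
  qed
  have g2: "?G2 \<subseteq> T3 n ?E1"
  proof
    fix x assume "x \<in> ?G2"
    then obtain c where c: "x = (u,s,c)" "(s,c) \<in> E" by auto
    have sc: "s<c \<and> c<Y" using P1[OF ps c(2)] .
    have cn: "c<n" using inE c(2) by auto
    have "(u,c) \<notin> E"
    proof
      assume h: "(u,c) \<in> E"
      have "cw n u s c" using us sc cn unfolding cw_lin by auto
      then show False using arcl[OF h] nus by blast
    qed
    moreover have "(c,u) \<notin> E" using inL[OF uY, of c] sc us by auto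
    ultimately show "x \<in> T3 n ?E1" using c sc us un sn cn unfolding T3_def by auto
  qed
  have d1: "?G1 \<inter> T3 n E = {}" using nus unfolding T3_def by auto
  have d2: "?G2 \<inter> T3 n E = {}" using nus unfolding T3_def by auto
  have d3: "?G1 \<inter> ?G2 = {}" using noloop by auto
  have "card (T3 n E) + card ?G1 + card ?G2 \<le> card (T3 n ?E1) + card ?L"
    using card_bound[OF T3_finite T3_finite i g1 g2 d1 d2 d3] fin_in by blast
  moreover have "card ?G1 = card {a. (a,u)\<in>E}" by (rule card_image) (auto simp: inj_on_def)
  moreover have "card ?G2 = card {c. (s,c)\<in>E}" by (rule card_image) (auto simp: inj_on_def)
  moreover have "card ?L \<le> card {a. (a,s)\<in>E}" by (rule card_image_le[OF fin_in])
  ultimately show "P3t n E + card {a. (a,u)\<in>E} + card {c. (s,c)\<in>E} \<le> P3t n ?E1 + card {a. (a,s)\<in>E}"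
    unfolding P3t_T3 by linarith
qed

end

context norm begin

definition nv :: "nat \<Rightarrow> nat" where "nv s = (LEAST c. s < c \<and> (s,c) \<notin> E)"
definition pv :: "nat \<Rightarrow> nat" where "pv s = Max {a. a < s \<and> (a,s) \<notin> E}"
definition outadm :: "nat \<Rightarrow> bool" where "outadm s \<longleftrightarrow> (\<forall>w. s<w \<and> w<nv s \<longrightarrow> (w, nv s) \<in> E)"
definition inadm :: "nat \<Rightarrow> bool" where "inadm s \<longleftrightarrow> (\<forall>w. pv s<w \<and> w<s \<longrightarrow> (pv s, w) \<in> E)"

lemma nv_props: assumes "part s"
  shows "s < nv s" "nv s \<le> Y" "(s, nv s) \<notin> E" "\<And>c. s<c \<Longrightarrow> c<nv s \<Longrightarrow> (s,c) \<in> E"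
    "\<And>c. s<c \<Longrightarrow> (s,c) \<notin> E \<Longrightarrow> nv s \<le> c"
proof -
  have ex: "s < Y \<and> (s,Y) \<notin> E" using assms unfolding part_def by auto
  show "s < nv s" "(s, nv s) \<notin> E" using LeastI[of "\<lambda>c. s < c \<and> (s,c) \<notin> E", OF ex] unfolding nv_def by auto
  show "nv s \<le> Y" unfolding nv_def using ex by (rule Least_le)
  show "\<And>c. s<c \<Longrightarrow> (s,c) \<notin> E \<Longrightarrow> nv s \<le> c" unfolding nv_def by (rule Least_le) auto
  show "\<And>c. s<c \<Longrightarrow> c<nv s \<Longrightarrow> (s,c) \<in> E" unfolding nv_def using not_less_Least by blast
qed

lemma pv_props: assumes "part s"
  shows "pv s < s" "(pv s, s) \<notin> E" "\<And>a. pv s<a \<Longrightarrow> a<s \<Longrightarrow> (a,s) \<in> E"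
    "\<And>a. a<s \<Longrightarrow> (a,s) \<notin> E \<Longrightarrow> a \<le> pv s"
proof -
  let ?S = "{a. a < s \<and> (a,s) \<notin> E}"
  have fin: "finite ?S" by (rule finite_subset[of _ "{..<s}"]) auto
  have ne: "0 \<in> ?S" using assms unfolding part_def by auto
  have m: "pv s \<in> ?S" unfolding pv_def using fin ne Max_in by blast
  show "pv s < s" "(pv s, s) \<notin> E" using m by auto
  show le: "\<And>a. a<s \<Longrightarrow> (a,s) \<notin> E \<Longrightarrow> a \<le> pv s" unfolding pv_def using fin by (intro Max_ge) auto
  show "\<And>a. pv s<a \<Longrightarrow> a<s \<Longrightarrow> (a,s) \<in> E" using le by force
qed

lemma part_interval: assumes "part a" "part b" "a<c" "c<b" shows "part c"
proof -
  have a0: "0<a" and bY: "b<Y" using assms unfolding part_def by auto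
  have cn: "c<n" using assms(4) bY Yn by auto
  have "(0,c) \<notin> E"
  proof
    assume h: "(0,c) \<in> E"
    have "cw n 0 a c" using a0 assms(3) cn unfolding cw_lin by auto
    then show False using arcl[OF h] assms(1) unfolding part_def by auto
  qed
  moreover have "(c,0) \<notin> E" using v0[of c] a0 assms(3,4) bY by auto
  moreover have "(c,Y) \<notin> E"
  proof
    assume h: "(c,Y) \<in> E"
    have "cw n c b Y" using assms(4) bY Yn unfolding cw_lin by auto
    then show False using arcl[OF h] assms(2) unfolding part_def by auto
  qed
  moreover have "(Y,c) \<notin> E" using Yu[of c] assms(4) bY by auto
  ultimately show ?thesis unfolding part_def using a0 assms(3,4) bY by auto
qed

lemma max_outadm: assumes "part q" "\<And>s. part s \<Longrightarrow> s \<le> q" shows "outadm q"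
  unfolding outadm_def
proof (intro allI impI)
  fix w assume w: "q < w \<and> w < nv q"
  show "(w, nv q) \<in> E"
  proof (rule ccontr)
    assume nw: "(w, nv q) \<notin> E"
    have q0: "0<q" using assms unfolding part_def by auto
    have nvY: "nv q \<le> Y" using nv_props[OF assms(1)] by auto
    have wY: "w<Y" using w nvY by auto
    have "(0,w) \<notin> E"
    proof
      assume h: "(0,w) \<in> E"
      have "cw n 0 q w" using q0 w wY Yn unfolding cw_lin by auto
      then show False using arcl[OF h] assms(1) unfolding part_def by auto
    qed
    moreover have "(w,0) \<notin> E" using v0[of w] q0 w wY by auto
    moreover have "(w,Y) \<notin> E"
    proof
      assume h: "(w,Y) \<in> E"
      show False
      proof (cases "nv q = Y")
        case True thus False using h nw by simp
      next
        case False
        then have "cw n w (nv q) Y" using w nvY Yn unfolding cw_lin by auto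
        then show False using arcl[OF h] nw by auto
      qed
    qed
    moreover have "(Y,w) \<notin> E" using Yu[of w] wY by auto
    ultimately have "part w" unfolding part_def using q0 w wY by auto
    then show False using assms(2)[of w] w by auto
  qed
qed

lemma min_inadm: assumes "part p" "\<And>s. part s \<Longrightarrow> p \<le> s" shows "inadm p"
  unfolding inadm_def
proof (intro allI impI)
  fix w assume w: "pv p < w \<and> w < p"
  show "(pv p, w) \<in> E"
  proof (rule ccontr)
    assume nw: "(pv p, w) \<notin> E"
    have pY: "p<Y" using assms unfolding part_def by auto
    have wY: "w<Y" using w pY by auto
    have w0: "0<w" using w by auto
    have "(0,w) \<notin> E"
    proof
      assume h: "(0,w) \<in> E"
      show False
      proof (cases "pv p = 0")
        case True thus False using h nw by simp
      next
        case False
        then have "cw n 0 (pv p) w" using w wY Yn unfolding cw_lin by auto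
        then show False using arcl[OF h] nw by auto
      qed
    qed
    moreover have "(w,0) \<notin> E" using v0[of w] w0 wY by auto
    moreover have "(w,Y) \<notin> E"
    proof
      assume h: "(w,Y) \<in> E"
      have "cw n w p Y" using w pY Yn unfolding cw_lin by auto
      then show False using arcl[OF h] assms(1) unfolding part_def by auto
    qed
    moreover have "(Y,w) \<notin> E" using Yu[of w] wY by auto
    ultimately have "part w" unfolding part_def using w0 wY by auto
    then show False using assms(2)[of w] w by auto
  qed
qed

lemma main_norm:
  assumes px: "part x"
    and H: "\<And>v. part v \<or> v = Y \<Longrightarrow> {c. (v,c) \<in> E} \<noteq> {}"
  shows "\<exists>E'. admissible n E' \<and> P3t n E' > P3t n E"
proof (rule ccontr)
  assume NO: "\<not> (\<exists>E'. admissible n E' \<and> P3t n E' > P3t n E)"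
  let ?P = "{s. part s}"
  have finP: "finite ?P" by (rule finite_subset[of _ "{..<Y}"]) (auto simp: part_def)
  have neP: "x \<in> ?P" using px by auto
  define q where "q = Max ?P"
  define p where "p = Min ?P"
  have qP: "q \<in> ?P" unfolding q_def using Max_in finP neP by blast
  have pP: "p \<in> ?P" unfolding p_def using Min_in finP neP by blast
  have pq: "part q" "part p" using qP pP by auto
  have qmax: "\<And>s. part s \<Longrightarrow> s \<le> q" unfolding q_def using finP by (intro Max_ge) auto
  have pmin: "\<And>s. part s \<Longrightarrow> p \<le> s" unfolding p_def using finP by (intro Min_le) auto
  have oq: "outadm q" using max_outadm pq qmax by blast
  have ip: "inadm p" using min_inadm pq pmin by blast
  define t where "t = (LEAST s. part s \<and> outadm s)"
  have t: "part t" "outadm t" using LeastI[of "\<lambda>s. part s \<and> outadm s" q] pq oq unfolding t_def by auto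
  have tleast: "\<And>s. s < t \<Longrightarrow> part s \<Longrightarrow> \<not> outadm s" unfolding t_def using not_less_Least by blast
  let ?Q = "{s. part s \<and> s \<le> t \<and> inadm s}"
  have finQ: "finite ?Q" by (rule finite_subset[of _ "{..t}"]) auto
  have neQ: "p \<in> ?Q" using pq ip pmin t by auto
  define t' where "t' = Max ?Q"
  have t'Q: "t' \<in> ?Q" unfolding t'_def using Max_in[OF finQ] neQ by blast
  have t': "part t'" "t' \<le> t" "inadm t'" using t'Q by auto
  have t'max: "\<And>s. part s \<Longrightarrow> s \<le> t \<Longrightarrow> inadm s \<Longrightarrow> s \<le> t'" unfolding t'_def using finQ by (intro Max_ge) auto
  have partI: "\<And>s. t' \<le> s \<Longrightarrow> s \<le> t \<Longrightarrow> part s"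
  proof -
    fix s assume "t' \<le> s" "s \<le> t"
    then show "part s" using part_interval[OF t'(1) t(1), of s] t t' by (cases "s = t' \<or> s = t") auto
  qed
  have F5: "\<And>c. (t,c) \<in> E \<Longrightarrow> (t',c) \<in> E"
  proof (rule ccontr)
    fix c assume tc: "(t,c) \<in> E" and nt'c: "(t',c) \<notin> E"
    have lt: "t' < t" using t'(2) tc nt'c by (cases "t' = t") auto
    have tcY: "t<c \<and> c<Y" using P1[OF t(1) tc] .
    let ?S = "{s. t' \<le> s \<and> s < t \<and> (s,c) \<notin> E}"
    have finS: "finite ?S" by (rule finite_subset[of _ "{..<t}"]) auto
    have neS: "t' \<in> ?S" using lt nt'c by auto
    define s where "s = Max ?S"
    have sS: "s \<in> ?S" unfolding s_def using Max_in[OF finS] neS by blast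
    have s: "t' \<le> s" "s < t" "(s,c) \<notin> E" using sS by auto
    have smax: "\<And>r. t' \<le> r \<Longrightarrow> r < t \<Longrightarrow> (r,c) \<notin> E \<Longrightarrow> r \<le> s" unfolding s_def using finS by (intro Max_ge) auto
    have ps: "part s" using partI s by auto
    have s1c: "(Suc s, c) \<in> E"
    proof (cases "Suc s = t")
      case True thus ?thesis using tc by simp
    next
      case False
      then have "Suc s < t" using s by auto
      then show ?thesis using smax[of "Suc s"] s by (metis Suc_n_not_le_n le_SucI)
    qed
    have "\<not> outadm s" using tleast s ps by auto
    then obtain w where w: "s < w" "w < nv s" "(w, nv s) \<notin> E" unfolding outadm_def by auto
    have nvc: "nv s \<le> c" using nv_props(5)[OF ps, of c] s tcY by auto
    have cn: "c < n" using inE tc by auto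
    have wc: "(w,c) \<in> E"
    proof (cases "w = Suc s")
      case True thus ?thesis using s1c by simp
    next
      case False
      then have "cw n (Suc s) w c" using w nvc cn unfolding cw_lin by auto
      then show ?thesis using arcl[OF s1c] by blast
    qed
    show False
    proof (cases "nv s = c")
      case True thus False using wc w by simp
    next
      case False
      then have "cw n w (nv s) c" using w nvc cn unfolding cw_lin by auto
      then show False using arcl[OF wc] w by blast
    qed
  qed
  have F6: "\<And>a. (a,t') \<in> E \<Longrightarrow> (a,t) \<in> E"
  proof (rule ccontr)
    fix a assume at': "(a,t') \<in> E" and nat: "(a,t) \<notin> E"
    have lt: "t' < t" using t'(2) at' nat by (cases "t' = t") auto
    have a0: "0<a \<and> a<t'" using P2[OF t'(1) at'] .
    let ?S = "{s. t' < s \<and> s \<le> t \<and> (a,s) \<notin> E}"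
    have finS: "finite ?S" by (rule finite_subset[of _ "{..t}"]) auto
    have neS: "t \<in> ?S" using lt nat by auto
    define s where "s = Min ?S"
    have sS: "s \<in> ?S" unfolding s_def using Min_in[OF finS] neS by blast
    have s: "t' < s" "s \<le> t" "(a,s) \<notin> E" using sS by auto
    have smin: "\<And>r. t' < r \<Longrightarrow> r \<le> t \<Longrightarrow> (a,r) \<notin> E \<Longrightarrow> s \<le> r" unfolding s_def using finS by (intro Min_le) auto
    have ps: "part s" using partI s by auto
    have as1: "(a, s - 1) \<in> E"
    proof (cases "s - 1 = t'")
      case True thus ?thesis using at' by simp
    next
      case False
      then have "t' < s - 1" using s by auto
      then show ?thesis using smin[of "s - 1"] s by fastforce
    qed
    have "\<not> inadm s" using t'max[OF ps s(2)] s by auto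
    then obtain w where w: "pv s < w" "w < s" "(pv s, w) \<notin> E" unfolding inadm_def by auto
    have apv: "a \<le> pv s" using pv_props(4)[OF ps, of a] s a0 by auto
    have sn: "s < n" using ps Yn unfolding part_def by auto
    have pvs1: "(pv s, s - 1) \<in> E"
    proof (cases "pv s = a")
      case True thus ?thesis using as1 by simp
    next
      case False
      then have "cw n a (pv s) (s - 1)" using w apv sn unfolding cw_lin by auto
      then show ?thesis using arcl[OF as1] by blast
    qed
    show False
    proof (cases "w = s - 1")
      case True thus False using pvs1 w by simp
    next
      case False
      then have "cw n (pv s) w (s - 1)" using w sn unfolding cw_lin by auto
      then show False using arcl[OF pvs1] w by blast
    qed
  qed
  define v where "v = nv t"
  define u where "u = pv t'"
  have tv: "t < v" "v \<le> Y" "(t,v) \<notin> E" using nv_props[OF t(1)] unfolding v_def by auto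
  have btw1: "\<forall>w. t<w \<and> w<v \<longrightarrow> (t,w)\<in>E \<and> (w,v)\<in>E"
    using nv_props(4)[OF t(1)] t(2) unfolding outadm_def v_def by auto
  have ut: "u < t'" "(u,t') \<notin> E" using pv_props[OF t'(1)] unfolding u_def by auto
  have btw2: "\<forall>w. u<w \<and> w<t' \<longrightarrow> (u,w)\<in>E \<and> (w,t')\<in>E"
    using pv_props(3)[OF t'(1)] t'(3) unfolding inadm_def u_def by auto
  note M1 = out_move[OF t(1) tv btw1]
  note M2 = in_move[OF t'(1) ut btw2]
  have le1: "P3t n (insert (t,v) E) \<le> P3t n E" using NO M1(1) by auto
  have le2: "P3t n (insert (u,t') E) \<le> P3t n E" using NO M2(1) by auto
  have c1: "card {c. (t,c)\<in>E} \<le> card {c. (t',c)\<in>E}" using F5 fin_out by (intro card_mono) auto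
  have c2: "card {a. (a,t')\<in>E} \<le> card {a. (a,t)\<in>E}" using F6 fin_in by (intro card_mono) auto
  have "card {c. (v,c)\<in>E} = 0" using M1(2) M2(2) le1 le2 c1 c2 by linarith
  then have ov: "{c. (v,c)\<in>E} = {}" using fin_out by simp
  have "part v \<or> v = Y"
  proof (cases "v = Y")
    case False
    then have vY: "v < Y" using tv by auto
    have t0: "0 < t" using t unfolding part_def by auto
    have "(0,v) \<notin> E"
    proof
      assume h: "(0,v) \<in> E"
      have "cw n 0 t v" using t0 tv vY Yn unfolding cw_lin by auto
      then show False using arcl[OF h] t(1) unfolding part_def by auto
    qed
    moreover have "(v,0) \<notin> E" using v0[of v] t0 tv by auto
    moreover have "(v,Y) \<notin> E" using ov by auto
    moreover have "(Y,v) \<notin> E" using Yu vY by auto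
    ultimately show ?thesis unfolding part_def using t0 tv vY by auto
  qed simp
  then show False using H ov by blast
qed

end

definition nadj :: "(nat \<times> nat) set \<Rightarrow> nat \<Rightarrow> nat \<Rightarrow> bool" where
  "nadj E a b \<longleftrightarrow> (a,b) \<notin> E \<and> (b,a) \<notin> E"

definition longE :: "nat \<Rightarrow> (nat \<times> nat) set \<Rightarrow> bool" where
  "longE n E \<longleftrightarrow> (\<exists>a b w. (a,b) \<in> E \<and> cw n a w b)"

lemma dist_ge1: "dist_cw n a b \<ge> 1" unfolding dist_cw_def by simp

lemma cwset_fin: "finite {w. cw n a w b}"
  by (rule finite_subset[of _ "{..<n}"]) (auto simp: cw_def)

lemma dist_long: "cw n a w b \<Longrightarrow> dist_cw n a b \<ge> 2"
proof -
  assume "cw n a w b"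
  then have "{w. cw n a w b} \<noteq> {}" by auto
  then have "card {w. cw n a w b} \<ge> 1" using cwset_fin by (simp add: Suc_le_eq card_gt_0_iff)
  then show ?thesis unfolding dist_cw_def by simp
qed

lemma dist_01: "1 < n \<Longrightarrow> dist_cw n 0 1 = 1"
proof -
  have "{w. cw n 0 w 1} = {}" unfolding cw_lin by auto
  then show "dist_cw n 0 1 = 1" unfolding dist_cw_def by simp
qed

lemma d1_norm:
  assumes adm: "admissible n E" and pq: "0<p" "p<q" "q<n"
    and n0p: "nadj E 0 p" and n0q: "nadj E 0 q" and npq: "nadj E p q"
    and out0: "\<And>c. (0,c) \<notin> E" and lg: "longE n E"
  shows "improvable n E"
proof -
  have ci: "circ_interval n E" using adm unfolding admissible_def by blast
  have tf: "two_free E" using adm unfolding admissible_def by blast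
  have sub: "E \<subseteq> {..<n}\<times>{..<n}" using adm adm_sub by blast
  have noloop: "\<And>u. (u,u) \<notin> E" using adm unfolding admissible_def circ_interval_def digraph_def by blast
  have arcl: "\<And>a b c. (a,c) \<in> E \<Longrightarrow> cw n a b c \<Longrightarrow> (a,b) \<in> E \<and> (b,c) \<in> E" using arc[OF ci] by blast
  have n1: "1 < n" using pq by auto
  have p0: "(p,0) \<notin> E" "(0,p) \<notin> E" using n0p unfolding nadj_def by auto
  have q0: "(q,0) \<notin> E" "(0,q) \<notin> E" using n0q unfolding nadj_def by auto
  have pq2: "(p,q) \<notin> E" "(q,p) \<notin> E" using npq unfolding nadj_def by auto
  have n10: "(1,0) \<notin> E"
  proof
    assume h: "(1,0) \<in> E"
    show False
    proof (cases "p = 1")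
      case True thus False using h p0 by simp
    next
      case False
      then have "cw n 1 p 0" using pq unfolding cw_lin by auto
      then show False using arcl[OF h] p0 by blast
    qed
  qed
  let ?E1 = "insert (0,1) E"
  have adm1: "admissible n ?E1"
  proof -
    have "digraph n ?E1" using sub noloop n1 unfolding digraph_def by auto
    moreover have "two_free ?E1" using tf n10 unfolding two_free_def by auto
    moreover have "\<forall>a b c. cw n a b c \<and> (a,c) \<in> ?E1 \<longrightarrow> (a,b) \<in> ?E1 \<and> (b,c) \<in> ?E1"
    proof (intro allI impI)
      fix a b c assume h: "cw n a b c \<and> (a,c) \<in> ?E1"
      show "(a,b) \<in> ?E1 \<and> (b,c) \<in> ?E1"
      proof (cases "(a,c) = (0,1)")
        case True
        then show ?thesis using h unfolding cw_lin by auto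
      next
        case False
        then have ac: "(a,c) \<in> E" using h by auto
        have "cw n a b c" using h by blast
        then show ?thesis using arcl[OF ac] by blast
      qed
    qed
    ultimately show ?thesis unfolding admissible_def circ_interval_def by blast
  qed
  have T: "T3 n E \<subseteq> T3 n ?E1"
  proof
    fix x assume x: "x \<in> T3 n E"
    then obtain a b c where abc: "x = (a,b,c)" "a<n" "b<n" "c<n" "a\<noteq>b" "b\<noteq>c" "a\<noteq>c"
      "(a,b)\<in>E" "(b,c)\<in>E" "(a,c)\<notin>E" "(c,a)\<notin>E" unfolding T3_def by auto
    have "(a,c) \<noteq> (0,1)" using abc out0 by auto
    moreover have "(c,a) \<noteq> (0,1)"
    proof
      assume "(c,a) = (0,1)"
      then have h1: "(1,b) \<in> E" and h2: "(b,0) \<in> E" using abc by auto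
      have b0: "b \<noteq> 0" using h2 noloop by (metis)
      have "b \<noteq> q" using h2 q0 by auto
      moreover have "\<not> b < q"
      proof
        assume "b<q"
        then have "cw n b q 0" using b0 pq unfolding cw_lin by auto
        then show False using arcl[OF h2] q0 by blast
      qed
      moreover have "\<not> q < b"
      proof
        assume qb: "q<b"
        show False
        proof (cases "p = 1")
          case True
          then have "cw n 1 q b" using pq qb abc unfolding cw_lin by auto
          then show False using arcl[OF h1] pq2 True by blast
        next
          case False
          then have "cw n 1 p b" using pq qb abc unfolding cw_lin by auto
          then have pb: "(p,b) \<in> E" using arcl[OF h1] by blast
          have "cw n p q b" using pq qb abc unfolding cw_lin by auto
          then show False using arcl[OF pb] pq2 by blast
        qed
      qed
      ultimately show False by auto
    qed
    ultimately show "x \<in> T3 n ?E1" using abc unfolding T3_def by auto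
  qed
  have P: "P3t n E \<le> P3t n ?E1" unfolding P3t_T3 using T T3_finite by (intro card_mono) auto
  obtain g1 g2 w where g: "(g1,g2) \<in> E" "cw n g1 w g2" using lg unfolding longE_def by blast
  have X1: "XS n ?E1 \<subseteq> XS n E"
  proof
    fix y assume y: "y \<in> XS n ?E1"
    then obtain e f where ef: "y = (e,f)" "e \<in> ?E1" "non_edge n ?E1 f" "dist_cw n (fst e) (snd e) > dist_cw n (fst f) (snd f)"
      unfolding XS_def by auto
    have "e \<noteq> (0,1)" using ef(4) dist_01[OF n1] dist_ge1[of n "fst f" "snd f"] by auto
    then show "y \<in> XS n E" using ef unfolding XS_def non_edge_def by auto
  qed
  have ne01: "non_edge n E (0,1)" unfolding non_edge_def using n1 out0 n10 by auto
  have inX: "((g1,g2),(0,1)) \<in> XS n E" unfolding XS_def using g ne01 dist_long[OF g(2)] dist_01[OF n1] by auto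
  have notX: "((g1,g2),(0,1)) \<notin> XS n ?E1" unfolding XS_def non_edge_def by auto
  have "XS n ?E1 \<subset> XS n E" using X1 inX notX by blast
  then have xl: "xi n ?E1 < xi n E" unfolding xi_XS using XS_finite[OF sub] psubset_card_mono by blast
  show ?thesis unfolding improvable_def using adm1 P xl
    by (metis le_neq_implies_less)
qed

lemma rot_self: "0<n \<Longrightarrow> t<n \<Longrightarrow> rot n (n - t) t = 0"
  unfolding rot_def by simp

lemma d1_long:
  assumes adm: "admissible n E" and tpq: "t<n" "p<n" "q<n" "t\<noteq>p" "t\<noteq>q" "p\<noteq>q"
    and ntp: "nadj E t p" and ntq: "nadj E t q" and npq: "nadj E p q"
    and outt: "\<And>c. (t,c) \<notin> E" and lg: "longE n E"
  shows "improvable n E"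
proof -
  have n0: "0<n" using tpq by auto
  have sub: "E \<subseteq> {..<n}\<times>{..<n}" using adm adm_sub by blast
  let ?k = "n - t"
  let ?F = "rotE n ?k E"
  let ?r = "rot n ?k"
  have r0: "?r t = 0" using rot_self n0 tpq by auto
  have mem: "\<And>a b. a<n \<Longrightarrow> b<n \<Longrightarrow> (?r a, ?r b) \<in> ?F \<longleftrightarrow> (a,b) \<in> E" using mem_rotE[OF n0 sub] by blast
  have req: "\<And>a b. a<n \<Longrightarrow> b<n \<Longrightarrow> ?r a = ?r b \<longleftrightarrow> a = b" using rot_eq_iff[OF n0] by blast
  have admF: "admissible n ?F" using admissible_rot[OF n0 adm] .
  have nadjF: "\<And>a b. a<n \<Longrightarrow> b<n \<Longrightarrow> nadj E a b \<Longrightarrow> nadj ?F (?r a) (?r b)"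
    unfolding nadj_def using mem by blast
  have outF: "\<And>c. (0,c) \<notin> ?F"
  proof
    fix c assume "(0,c) \<in> ?F"
    then obtain a b where ab: "(a,b) \<in> E" "0 = ?r a" "c = ?r b" by (rule rotE_elem)
    have "a<n" using ab sub by auto
    then have "a = t" using req[of a t] ab r0 tpq by auto
    then show False using ab outt by auto
  qed
  have lgF: "longE n ?F"
  proof -
    obtain a b w where abw: "(a,b) \<in> E" "cw n a w b" using lg unfolding longE_def by blast
    have "a<n" "b<n" "w<n" using abw sub unfolding cw_def by auto
    then have "cw n (?r a) (?r w) (?r b)" using cw_rot[OF n0] abw by auto
    moreover have "(?r a, ?r b) \<in> ?F" using mem \<open>a<n\<close> \<open>b<n\<close> abw by auto
    ultimately show ?thesis unfolding longE_def by blast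
  qed
  have rp: "?r p \<noteq> 0" "?r q \<noteq> 0" "?r p \<noteq> ?r q" "?r p < n" "?r q < n"
    using req tpq r0 rot_lt[OF n0] by metis+
  have NP: "nadj ?F 0 (?r p)" "nadj ?F 0 (?r q)" "nadj ?F (?r p) (?r q)"
    using nadjF tpq ntp ntq npq r0 by metis+
  have "improvable n ?F"
  proof (cases "?r p < ?r q")
    case True
    show ?thesis using d1_norm[OF admF _ True rp(5) NP outF lgF] rp by auto
  next
    case False
    then have "?r q < ?r p" using rp by auto
    moreover have "nadj ?F (?r q) (?r p)" using NP unfolding nadj_def by auto
    ultimately show ?thesis using d1_norm[OF admF _ _ rp(4) NP(2,1) _ outF lgF] rp by auto
  qed
  then show ?thesis using improvable_rot[OF n0 adm] by blast
qed

lemma short_succ: assumes "a<n" "b<n" "a\<noteq>b" "\<not>(\<exists>w. cw n a w b)" shows "b = (a+1) mod n"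
proof (rule ccontr)
  assume nb: "b \<noteq> (a+1) mod n"
  have "cw n a ((a+1) mod n) b"
  proof (cases "a + 1 < n")
    case True
    then have "(a+1) mod n = a+1" by simp
    then show ?thesis using assms nb True unfolding cw_lin by auto
  next
    case False
    then have "a + 1 = n" using assms by auto
    then have "(a+1) mod n = 0" by simp
    then show ?thesis using assms nb \<open>a+1 = n\<close> unfolding cw_lin by auto
  qed
  then show False using assms by blast
qed

lemma no_cw_succ: "a < n \<Longrightarrow> \<not> cw n a x ((a+1) mod n)"
proof (cases "a + 1 < n")
  case True
  then have "(a+1) mod n = a+1" by simp
  then show ?thesis unfolding cw_lin by auto
next
  case False
  assume "a<n"
  then have "a + 1 = n" using False by auto
  then have "(a+1) mod n = 0" by simp
  then show ?thesis using \<open>a+1 = n\<close> unfolding cw_lin by auto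
qed

lemma modk: fixes x n k :: nat assumes "x<n" "0<k" "k<n" shows "(x+k) mod n \<noteq> x"
proof (cases "x + k < n")
  case True thus ?thesis using assms by simp
next
  case False
  then have "(x+k) mod n = x + k - n" using assms
    by (simp add: le_mod_geq)
  then show ?thesis using assms False by auto
qed

lemma succ2: "(((x::nat)+1) mod n + 1) mod n = (x+2) mod n"
  using mod_add_left_eq[of "x+1" n 1] by simp
lemma succ3: "(((x::nat)+2) mod n + 1) mod n = (x+3) mod n"
proof -
  have "(((x::nat)+2) mod n + 1) mod n = (x+2+1) mod n" by (rule mod_add_left_eq)
  also have "x+2+1 = x+3" by simp
  finally show ?thesis .
qed

lemma path_graph: assumes "4 \<le> n" shows "improvable n {}"
proof -
  let ?E = "{(0::nat,1::nat),(1,2)}"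
  have "admissible n ?E"
    unfolding admissible_def circ_interval_def digraph_def two_free_def using assms
    by (auto simp: cw_lin)
  moreover have "(0,1,2) \<in> T3 n ?E" unfolding T3_def using assms by auto
  then have "T3 n ?E \<noteq> {}" by auto
  then have "P3t n ?E > 0" unfolding P3t_T3 using T3_finite by (simp add: card_gt_0_iff)
  moreover have "T3 n {} = {}" unfolding T3_def by auto
  then have "P3t n {} = 0" unfolding P3t_T3 by simp
  ultimately show ?thesis unfolding improvable_def by auto
qed

lemma all_short:
  assumes adm: "admissible n E" and n4: "4 \<le> n" and nl: "\<not> longE n E"
    and t: "t<n" "\<And>c. (t,c) \<notin> E"
  shows "improvable n E"
proof (cases "E = {}")
  case True thus ?thesis using path_graph n4 by simp
next
  case False
  have ci: "circ_interval n E" using adm unfolding admissible_def by blast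
  have tf: "two_free E" using adm unfolding admissible_def by blast
  have sub: "E \<subseteq> {..<n}\<times>{..<n}" using adm adm_sub by blast
  have noloop: "\<And>u. (u,u) \<notin> E" using adm unfolding admissible_def circ_interval_def digraph_def by blast
  have sh: "\<And>a b. (a,b) \<in> E \<Longrightarrow> b = (a+1) mod n"
  proof -
    fix a b assume ab: "(a,b) \<in> E"
    then show "b = (a+1) mod n" using short_succ[of a n b] sub noloop nl unfolding longE_def by blast
  qed
  let ?M = "{i. i<n \<and> (i, (i+1) mod n) \<in> E}"
  obtain a0 b0 where "(a0,b0) \<in> E" using False by auto
  then have a0M: "a0 \<in> ?M" using sh sub by auto
  have tM: "t \<notin> ?M" using t by auto
  have "\<exists>w. w<n \<and> w \<notin> ?M \<and> (w+1) mod n \<in> ?M"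
  proof (rule ccontr)
    assume "\<not> ?thesis"
    then have step: "\<And>w. w<n \<Longrightarrow> w \<notin> ?M \<Longrightarrow> (w+1) mod n \<notin> ?M" by auto
    have all: "\<And>k. (t + k) mod n \<notin> ?M"
    proof -
      fix k show "(t + k) mod n \<notin> ?M"
      proof (induction k)
        case 0 thus ?case using tM t by simp
      next
        case (Suc k)
        have "((t + k) mod n + 1) mod n \<notin> ?M" using step[OF _ Suc] n4 by auto
        moreover have "((t + k) mod n + 1) mod n = (t + Suc k) mod n" by (simp add: mod_Suc_eq)
        ultimately show ?case by simp
      qed
    qed
    have "a0 < n" using a0M by auto
    then have "(t + (a0 + n - t)) mod n = a0" using t by simp
    then show False using all[of "a0 + n - t"] a0M by simp
  qed
  then obtain w where w: "w<n" "w \<notin> ?M" "(w+1) mod n \<in> ?M" by blast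
  define w1 where "w1 = (w+1) mod n"
  define w2 where "w2 = (w+2) mod n"
  have w12: "w2 = (w1 + 1) mod n" unfolding w1_def w2_def using succ2 by simp
  have n0: "0<n" using n4 by auto
  have wlt: "w1 < n" "w2 < n" unfolding w1_def w2_def using n0 by auto
  have d1: "w1 \<noteq> w" unfolding w1_def using modk[of w n 1] w n4 by auto
  have d2: "w2 \<noteq> w" unfolding w2_def using modk[of w n 2] w n4 by auto
  have d3: "w2 \<noteq> w1" unfolding w12 using modk[of w1 n 1] wlt n4 by auto
  have d4: "(w2 + 1) mod n \<noteq> w" using modk[of w n 3] w n4 unfolding w2_def succ3 by auto
  have nw1: "(w,w1) \<notin> E" using w unfolding w1_def by auto
  have w1w2: "(w1,w2) \<in> E" using w w12 unfolding w1_def by simp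
  have nw1w: "(w1,w) \<notin> E"
  proof
    assume "(w1,w) \<in> E"
    then have "w = w2" using sh w12 by auto
    then show False using d2 by simp
  qed
  let ?E1 = "insert (w,w1) E"
  have adm1: "admissible n ?E1"
  proof -
    have "digraph n ?E1" using sub noloop w wlt d1 unfolding digraph_def by auto
    moreover have "two_free ?E1" using tf nw1w unfolding two_free_def by auto
    moreover have "\<forall>a b c. cw n a b c \<and> (a,c) \<in> ?E1 \<longrightarrow> (a,b) \<in> ?E1 \<and> (b,c) \<in> ?E1"
    proof (intro allI impI)
      fix a b c assume h: "cw n a b c \<and> (a,c) \<in> ?E1"
      show "(a,b) \<in> ?E1 \<and> (b,c) \<in> ?E1"
      proof (cases "(a,c) = (w,w1)")
        case True
        then show ?thesis using h no_cw_succ[OF w(1), of b] unfolding w1_def by auto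
      next
        case False
        then have ac: "(a,c) \<in> E" using h by auto
        have "cw n a b c" using h by blast
        then show ?thesis using arc[OF ci ac] by blast
      qed
    qed
    ultimately show ?thesis unfolding admissible_def circ_interval_def by blast
  qed
  have T: "T3 n E \<subseteq> T3 n ?E1"
  proof
    fix x assume x: "x \<in> T3 n E"
    then obtain a b c where abc: "x = (a,b,c)" "a<n" "b<n" "c<n" "a\<noteq>b" "b\<noteq>c" "a\<noteq>c"
      "(a,b)\<in>E" "(b,c)\<in>E" "(a,c)\<notin>E" "(c,a)\<notin>E" unfolding T3_def by auto
    have b: "b = (a+1) mod n" and c: "c = (b+1) mod n" using sh abc by auto
    have c2: "c = (a+2) mod n" using b c succ2 by simp
    have "(a,c) \<noteq> (w,w1)"
    proof
      assume "(a,c) = (w,w1)"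
      then have "a = w" "c = w1" by auto
      then show False using c2 d3 unfolding w2_def by simp
    qed
    moreover have "(c,a) \<noteq> (w,w1)"
    proof
      assume "(c,a) = (w,w1)"
      then have "c = w" "a = w1" by auto
      then have "w = (w1 + 2) mod n" using c2 by simp
      also have "\<dots> = (w + 1 + 2) mod n" unfolding w1_def by (rule mod_add_left_eq)
      also have "w + 1 + 2 = w + 3" by simp
      finally show False using modk[of w n 3] w n4 by auto
    qed
    ultimately show "x \<in> T3 n ?E1" using abc unfolding T3_def by auto
  qed
  have newT: "(w,w1,w2) \<in> T3 n ?E1"
  proof -
    have "(w,w2) \<notin> E" using sh[of w w2] d3 unfolding w1_def by auto
    moreover have "(w2,w) \<notin> E" using sh[of w2 w] d4 by auto
    ultimately show ?thesis unfolding T3_def using w wlt d1 d2 d3 w1w2 by auto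
  qed
  have notT: "(w,w1,w2) \<notin> T3 n E" using nw1 unfolding T3_def by auto
  have "T3 n E \<subset> T3 n ?E1" using T newT notT by blast
  then have "P3t n E < P3t n ?E1" unfolding P3t_T3 using T3_finite psubset_card_mono by blast
  then show ?thesis unfolding improvable_def using adm1 by blast
qed

lemma d1_full:
  assumes adm: "admissible n E" and n4: "4 \<le> n" and tpq: "t<n" "p<n" "q<n" "t\<noteq>p" "t\<noteq>q" "p\<noteq>q"
    and ntp: "nadj E t p" and ntq: "nadj E t q" and npq: "nadj E p q"
    and outt: "\<And>c. (t,c) \<notin> E"
  shows "improvable n E"
proof (cases "longE n E")
  case True thus ?thesis using d1_long[OF adm tpq ntp ntq npq outt] by blast
next
  case False thus ?thesis using all_short[OF adm n4 False tpq(1) outt] by blast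
qed

lemma key_norm:
  assumes adm: "admissible n E" and n4: "4 \<le> n" and xY: "0<x" "x<Y" "Y<n"
    and n0x: "nadj E 0 x" and n0Y: "nadj E 0 Y" and nxY: "nadj E x Y"
  shows "improvable n E"
proof -
  interpret norm n E Y using adm xY n0Y unfolding nadj_def by unfold_locales auto
  have px: "part x" unfolding part_def using xY n0x nxY unfolding nadj_def by auto
  show ?thesis
  proof (cases "\<exists>v. (part v \<or> v = Y) \<and> {c. (v,c) \<in> E} = {}")
    case True
    then obtain v where v: "part v \<or> v = Y" "{c. (v,c) \<in> E} = {}" by blast
    show ?thesis
    proof (cases "v = Y")
      case True
      show ?thesis
        using d1_full[OF adm n4, of Y 0 x] xY n0Y n0x nxY v True unfolding nadj_def by auto
    next
      case False
      then have pv: "part v" using v by auto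
      then have "0<v" "v<Y" "nadj E v 0" "nadj E v Y" unfolding part_def nadj_def by auto
      then show ?thesis
        using d1_full[OF adm n4, of v 0 Y] xY n0Y v unfolding nadj_def by auto
    qed
  next
    case False
    then have "\<And>v. part v \<or> v = Y \<Longrightarrow> {c. (v,c) \<in> E} \<noteq> {}" by blast
    then obtain E' where "admissible n E'" "P3t n E' > P3t n E" using main_norm[OF px] by blast
    then show ?thesis unfolding improvable_def by blast
  qed
qed

lemma key:
  assumes adm: "admissible n E" and n4: "4 \<le> n" and abc: "a<b" "b<c" "c<n"
    and nab: "nadj E a b" and nac: "nadj E a c" and nbc: "nadj E b c"
  shows "improvable n E"
proof -
  have n0: "0<n" using n4 by auto
  have sub: "E \<subseteq> {..<n}\<times>{..<n}" using adm adm_sub by blast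
  let ?k = "n - a"
  let ?F = "rotE n ?k E"
  let ?r = "rot n ?k"
  have rv: "\<And>y. a \<le> y \<Longrightarrow> y < n \<Longrightarrow> ?r y = y - a"
  proof -
    fix y assume "a \<le> y" "y<n"
    then have e: "y + (n - a) = (y - a) + n" using abc by auto
    have "?r y = ((y - a) + n) mod n" unfolding rot_def by (simp only: e)
    then show "?r y = y - a" using \<open>y<n\<close> by simp
  qed
  have mem: "\<And>x y. x<n \<Longrightarrow> y<n \<Longrightarrow> (?r x, ?r y) \<in> ?F \<longleftrightarrow> (x,y) \<in> E" using mem_rotE[OF n0 sub] by blast
  have nadjF: "\<And>x y. x<n \<Longrightarrow> y<n \<Longrightarrow> nadj E x y \<Longrightarrow> nadj ?F (?r x) (?r y)"
    unfolding nadj_def using mem by blast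
  have ra: "?r a = 0" using rv[of a] abc by auto
  have rb: "?r b = b - a" using rv[of b] abc by auto
  have rc: "?r c = c - a" using rv[of c] abc by auto
  have "improvable n ?F"
  proof (rule key_norm[OF admissible_rot[OF n0 adm] n4, of "b - a" "c - a"])
    show "0 < b - a" "b - a < c - a" "c - a < n" using abc by auto
    show "nadj ?F 0 (b - a)" using nadjF[of a b] nab abc ra rb by auto
    show "nadj ?F 0 (c - a)" using nadjF[of a c] nac abc ra rc by auto
    show "nadj ?F (b - a) (c - a)" using nadjF[of b c] nbc abc rb rc by auto
  qed
  then show ?thesis using improvable_rot[OF n0 adm] by blast
qed

theorem mainTheorem10:
  fixes n :: nat and E :: "(nat \<times> nat) set" and X :: "nat set"
  assumes "n \<ge> 4" and "optimal n E" and "X \<subseteq> {0..<n}" and "stable E X"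
  shows "card X < 3"
proof (rule ccontr)
  assume "\<not> card X < 3"
  then have c3: "card X \<ge> 3" by simp
  have finX: "finite X" using assms(3) finite_subset by blast
  have adm: "admissible n E" using assms(2) unfolding optimal_def by blast
  define a where "a = Min X"
  define X1 where "X1 = X - {a}"
  define b where "b = Min X1"
  define X2 where "X2 = X1 - {b}"
  define c where "c = Min X2"
  have neX: "X \<noteq> {}" using c3 by auto
  have aX: "a \<in> X" unfolding a_def using Min_in finX neX by blast
  have cX1: "card X1 = card X - 1" unfolding X1_def using aX finX by simp
  have finX1: "finite X1" unfolding X1_def using finX by auto
  have neX1: "X1 \<noteq> {}" using cX1 c3 by auto
  have bX1: "b \<in> X1" unfolding b_def using Min_in finX1 neX1 by blast
  have cX2: "card X2 = card X1 - 1" unfolding X2_def using bX1 finX1 by simp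
  have finX2: "finite X2" unfolding X2_def using finX1 by auto
  have neX2: "X2 \<noteq> {}" using cX2 cX1 c3 by auto
  have cX2': "c \<in> X2" unfolding c_def using Min_in finX2 neX2 by blast
  have ab: "a < b"
  proof -
    have "a \<le> b" unfolding a_def using bX1 finX X1_def by auto
    moreover have "a \<noteq> b" using bX1 X1_def by auto
    ultimately show ?thesis by auto
  qed
  have bc: "b < c"
  proof -
    have "b \<le> c" unfolding b_def using cX2' finX1 X2_def by auto
    moreover have "b \<noteq> c" using cX2' X2_def by auto
    ultimately show ?thesis by auto
  qed
  have inX: "a \<in> X" "b \<in> X" "c \<in> X" using aX bX1 cX2' X1_def X2_def by auto
  have cn: "c < n" using inX assms(3) by auto
  have st: "\<And>u v. u \<in> X \<Longrightarrow> v \<in> X \<Longrightarrow> nadj E u v" using assms(4) unfolding stable_def nadj_def by auto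
  have "improvable n E" using key[OF adm assms(1) ab bc cn] st inX by auto
  then show False using optimal_not_improvable assms(2) by blast
qed

end
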